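(* For all $k,m\in\mathbb{N}$, \[ Q(1,2k+1;2)=0\qquad\text{and}\qquad Q(m+1,2k-1;2)=0. \]
   Context: $s(n,k)$ ($n\ge k\ge 0$) denotes the signed Stirling numbers of the first kind, defined by $\frac{[\ln(1+x)]^k}{k!}=\sum_{n=k}^\infty s(n,k)\frac{x^n}{n!}$ for $|x|<1$; equivalently $\prod_{j=0}^{n-1}(z-j)=\sum_{k=0}^n s(n,k)z^k$. For $m\in\mathbb{N}$, $k\in\mathbb{N}_0$ and $\alpha\in\mathbb{R}$ define \[ Q(m,k;\alpha)=\sum_{\ell=0}^{k}\binom{m+\ell-1}{m-1}\, s(m+k-1,m+\ell-1)\left(\frac{m+k-\alpha}{2}\right)^{\ell}, \] with the convention $0^0=1$. *)

theory Defs
  imports Complex_Main "HOL-Combinatorics.Stirling"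
begin

definition sstirling :: "nat \<Rightarrow> nat \<Rightarrow> int" where
  "sstirling n k = (-1) ^ (n + k) * int (stirling n k)"

definition Q :: "nat \<Rightarrow> nat \<Rightarrow> real \<Rightarrow> real" where
  "Q m k \<alpha> = (\<Sum>l = 0..k. real ((m + l - 1) choose (m - 1))
       * real_of_int (sstirling (m + k - 1) (m + l - 1))
       * ((real (m + k) - \<alpha>) / 2) ^ l)"

end

theory Submission
  imports Defs
begin

lemma binom_ext:
  fixes c t :: real
  assumes "j \<le> n"
  shows "(c + t) ^ j = (\<Sum>i\<le>n. real (j choose i) * c ^ (j - i) * t ^ i)"
proof -
  have "(c + t) ^ j = (t + c) ^ j" by (simp add: add.commute)
  also have "\<dots> = (\<Sum>i\<le>j. real (j choose i) * t ^ i * c ^ (j - i))"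
    by (simp add: binomial_ring)
  also have "\<dots> = (\<Sum>i\<le>n. real (j choose i) * c ^ (j - i) * t ^ i)"
    by (rule sum.mono_neutral_cong_left) (use assms in auto)
  finally show ?thesis .
qed

lemma G_poch:
  fixes z :: real
  shows "(\<Sum>j\<le>n. real_of_int (sstirling n j) * z ^ j) = (-1) ^ n * pochhammer (-z) n"
proof -
  have "(\<Sum>j\<le>n. real_of_int (sstirling n j) * z ^ j)
      = (\<Sum>j\<le>n. (-1) ^ n * (real (stirling n j) * (-z) ^ j))"
    by (rule sum.cong) (simp_all add: sstirling_def power_add power_minus[of z])
  also have "\<dots> = (-1) ^ n * pochhammer (-z) n"
    by (simp add: sum_distrib_left[symmetric] stirling_pochhammer)
  finally show ?thesis .
qed

lemma G_sym:
  fixes t :: real and n :: nat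
  defines "c \<equiv> (real n - 1) / 2"
  shows "(\<Sum>j\<le>n. real_of_int (sstirling n j) * (c + t) ^ j)
       = (-1) ^ n * (\<Sum>j\<le>n. real_of_int (sstirling n j) * (c - t) ^ j)"
proof -
  have "pochhammer (-(c + t)) n = (-1) ^ n * pochhammer (c + t - real n + 1) n"
    by (rule pochhammer_minus)
  also have "c + t - real n + 1 = t - c" by (simp add: c_def field_simps)
  finally have 1: "pochhammer (-(c + t)) n = (-1) ^ n * pochhammer (t - c) n" .
  have 2: "-(c - t) = t - c" by simp
  show ?thesis
    unfolding G_poch 1 2 by (simp add: power_mult_distrib[symmetric])
qed

lemma coeff_zero:
  fixes n i :: nat
  defines "c \<equiv> (real n - 1) / 2"
  assumes "odd (n + i)" "i \<le> n"
  shows "(\<Sum>j\<le>n. real_of_int (sstirling n j) * real (j choose i) * c ^ (j - i)) = 0"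
proof -
  define s where "s j = real_of_int (sstirling n j)" for j
  define d where "d i = (\<Sum>j\<le>n. s j * real (j choose i) * c ^ (j - i))" for i
  have exp: "(\<Sum>j\<le>n. s j * (c + t) ^ j) = (\<Sum>i\<le>n. d i * t ^ i)" for t
  proof -
    have "(\<Sum>j\<le>n. s j * (c + t) ^ j)
        = (\<Sum>j\<le>n. \<Sum>i\<le>n. s j * (real (j choose i) * c ^ (j - i) * t ^ i))"
      by (rule sum.cong) (auto simp: binom_ext sum_distrib_left)
    also have "\<dots> = (\<Sum>i\<le>n. \<Sum>j\<le>n. s j * (real (j choose i) * c ^ (j - i) * t ^ i))"
      by (rule sum.swap)
    also have "\<dots> = (\<Sum>i\<le>n. d i * t ^ i)"
      by (simp add: d_def sum_distrib_right mult.assoc)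
    finally show ?thesis .
  qed
  have "\<forall>t::real. (\<Sum>i\<le>n. (d i - (-1) ^ n * (-1) ^ i * d i) * t ^ i) = 0"
  proof
    fix t :: real
    have "(\<Sum>j\<le>n. s j * (c + t) ^ j) = (-1) ^ n * (\<Sum>j\<le>n. s j * (c + (-t)) ^ j)"
      using G_sym[of n t] unfolding s_def c_def by simp
    hence "(\<Sum>i\<le>n. d i * t ^ i) = (-1) ^ n * (\<Sum>i\<le>n. d i * (-t) ^ i)"
      by (simp only: exp)
    have "(\<Sum>i\<le>n. (d i - (-1) ^ n * (-1) ^ i * d i) * t ^ i)
        = (\<Sum>i\<le>n. d i * t ^ i) - (\<Sum>i\<le>n. (-1) ^ n * (d i * (-t) ^ i))"
    proof -
      have "\<And>q. (d q - (-1) ^ n * (-1) ^ q * d q) * t ^ q = d q * t ^ q - (-1) ^ n * (d q * (-t) ^ q)"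
      proof -
        fix q
        have "(-t) ^ q = (-1) ^ q * t ^ q" by (rule power_minus)
        thus "(d q - (-1) ^ n * (-1) ^ q * d q) * t ^ q = d q * t ^ q - (-1) ^ n * (d q * (-t) ^ q)"
          by (simp only:) (simp add: left_diff_distrib mult.assoc mult.left_commute)
      qed
      thus ?thesis by (simp only: sum_subtractf)
    qed
    also have "\<dots> = 0" using \<open>(\<Sum>i\<le>n. d i * t ^ i) = (-1) ^ n * (\<Sum>i\<le>n. d i * (-t) ^ i)\<close>
      by (simp add: sum_distrib_left)
    finally show "(\<Sum>i\<le>n. (d i - (-1) ^ n * (-1) ^ i * d i) * t ^ i) = 0" .
  qed
  hence "d i - (-1) ^ n * (-1) ^ i * d i = 0"
    using assms(3) by (subst (asm) polyfun_eq_0) simp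
  moreover have "(-1::real) ^ n * (-1) ^ i = -1"
    using assms(2) by (simp add: power_add[symmetric])
  ultimately have "d i = 0" by simp
  thus ?thesis by (simp add: d_def s_def)
qed

lemma Q_odd:
  fixes m k' :: nat
  assumes "odd k'"
  shows "Q (m + 1) k' 2 = 0"
proof -
  define n where "n = m + k'"
  define c where "c = (real n - 1) / 2"
  have cx: "(real (m + 1 + k') - 2) / 2 = c" by (simp add: c_def n_def)
  have "Q (m + 1) k' 2 = (\<Sum>l = 0..k'. real ((m + l) choose m)
       * real_of_int (sstirling n (m + l)) * c ^ l)"
    unfolding Q_def cx[symmetric] by (simp add: n_def add.commute add.left_commute)
  also have "\<dots> = (\<Sum>j = m..n. real_of_int (sstirling n j) * real (j choose m) * c ^ (j - m))"
    using sum.shift_bounds_cl_nat_ivl[of "\<lambda>j. real_of_int (sstirling n j) * real (j choose m) * c ^ (j - m)" 0 m k']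
    by (simp add: n_def add.commute mult.commute mult.left_commute)
  also have "\<dots> = (\<Sum>j\<le>n. real_of_int (sstirling n j) * real (j choose m) * c ^ (j - m))"
    by (rule sum.mono_neutral_left) auto
  also have "\<dots> = 0"
    unfolding c_def by (rule coeff_zero) (use assms in \<open>auto simp: n_def\<close>)
  finally show ?thesis .
qed

theorem corollary2p2:
  fixes k m :: nat
  assumes "k \<ge> 1" and "m \<ge> 1"
  shows "Q 1 (2 * k + 1) 2 = 0 \<and> Q (m + 1) (2 * k - 1) 2 = 0"
proof
  show "Q 1 (2 * k + 1) 2 = 0" using Q_odd[of "2*k+1" 0] by simp
  show "Q (m + 1) (2 * k - 1) 2 = 0" using Q_odd[of "2*k-1" m] assms by simp
qed

end
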